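(* Let $\mathcal{P}\subset\mathbb{R}^d$ be a polytope (cage) with $K$ vertices $v_1,\dots,v_K$, and let $\alpha=(\alpha_1,\dots,\alpha_K)^\top:\mathcal{P}\to\mathbb{R}^K$ be any valid generalized barycentric coordinate function for $\mathcal{P}$. Then for every $x\in\mathcal{P}$, the vector $\alpha(x)$ is a convex combination of simplex barycentric coordinate vectors $\alpha(x;\mathcal{P},T)$, where $T$ ranges over the simplices whose vertices are cage vertices of $\mathcal{P}$; that is, there exist weights $w_T(x)\ge 0$ with $\sum_T w_T(x)=1$ such that $\alpha(x)=\sum_T w_T(x)\,\alpha(x;\mathcal{P},T)$.
   Context: A function $\alpha:\mathcal{P}\to\mathbb{R}^K$ is a valid generalized barycentric coordinate function for $\mathcal{P}$ if for all $x\in\mathcal{P}$: (non-negativity) $\alpha_i(x)\ge 0$ for all $i$; (partition of unity) $\sum_i\alpha_i(x)=1$; (reproduction) $\sum_i \alpha_i(x)\,v_i = x$; and (Lagrange property) $\alpha_i(v_j)=\delta_{ij}$ for all $i,j$. For a non-degenerate (nonzero volume) simplex $T$ in $\mathbb{R}^d$ with vertex set $\{v_{l_0},\dots,v_{l_d}\}\subseteq\{v_1,\dots,v_K\}$ containing $x$, the simplex barycentric coordinates $\alpha(x;T)\in\mathbb{R}^{d+1}$ are the unique solution $\lambda$ of $\sum_{k}\lambda_k v_{l_k}=x$, $\sum_k\lambda_k=1$; the cage coordinates due to $T$, $\alpha(x;\mathcal{P},T)\in\mathbb{R}^K$, have entry $i$ equal to the simplex coordinate of $x$ associated with $v_i$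 if $v_i$ is a vertex of $T$, and $0$ otherwise. *)

theory Defs
  imports "HOL-Analysis.Analysis"
begin

text \<open>The cage: vertices v 0, ..., v (K-1) in real^'n (indices shifted by one w.r.t. the paper).\<close>

definition is_cage :: "nat \<Rightarrow> (nat \<Rightarrow> real^'n) \<Rightarrow> (real^'n) set \<Rightarrow> bool" where
  "is_cage K v P \<longleftrightarrow>
     P = convex hull (v ` {..<K}) \<and>
     inj_on v {..<K} \<and>
     (\<forall>i<K. v i extreme_point_of P) \<and>
     aff_dim P = int CARD('n)"

definition valid_gbc :: "nat \<Rightarrow> (nat \<Rightarrow> real^'n) \<Rightarrow> (real^'n) set \<Rightarrow> (real^'n \<Rightarrow> nat \<Rightarrow> real) \<Rightarrow> bool" where
  "valid_gbc K v P alpha \<longleftrightarrow>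
     (\<forall>x\<in>P.
        (\<forall>i<K. alpha x i \<ge> 0) \<and>
        (\<Sum>i<K. alpha x i) = 1 \<and>
        (\<Sum>i<K. alpha x i *\<^sub>R v i) = x) \<and>
     (\<forall>i<K. \<forall>j<K. alpha (v j) i = (if i = j then 1 else 0))"

definition cage_simplex :: "nat \<Rightarrow> (nat \<Rightarrow> real^'n) \<Rightarrow> nat set \<Rightarrow> bool" where
  "cage_simplex K v T \<longleftrightarrow>
     T \<subseteq> {..<K} \<and> card T = CARD('n) + 1 \<and> inj_on v T \<and>
     \<not> affine_dependent (v ` T)"

definition simplices_containing :: "nat \<Rightarrow> (nat \<Rightarrow> real^'n) \<Rightarrow> real^'n \<Rightarrow> nat set set" where
  "simplices_containing K v x =
     {T. cage_simplex K v T \<and> x \<in> convex hull (v ` T)}"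

text \<open>Simplex barycentric coordinates of x w.r.t. T (the unique solution lambda, supported on T),
  extended by zero to all cage indices: the cage coordinates alpha(x; P, T).\<close>

definition cage_coords :: "(nat \<Rightarrow> real^'n) \<Rightarrow> nat set \<Rightarrow> real^'n \<Rightarrow> nat \<Rightarrow> real" where
  "cage_coords v T x =
     (THE l. (\<forall>j. j \<notin> T \<longrightarrow> l j = 0) \<and> (\<Sum>j\<in>T. l j) = 1 \<and> (\<Sum>j\<in>T. l j *\<^sub>R v j) = x)"

end

theory Submission
  imports Defs
begin

lemma cc_eq:
  fixes v :: "nat \<Rightarrow> real^'n"
  assumes fin: "finite T" and inj: "inj_on v T" and ind: "\<not> affine_dependent (v ` T)"
    and l0: "\<forall>j. j \<notin> T \<longrightarrow> l j = 0" and l1: "sum l T = 1" and l2: "(\<Sum>j\<in>T. l j *\<^sub>R v j) = x"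
  shows "cage_coords v T x = l"
  unfolding cage_coords_def
proof (rule the_equality)
  show "(\<forall>j. j \<notin> T \<longrightarrow> l j = 0) \<and> sum l T = 1 \<and> (\<Sum>j\<in>T. l j *\<^sub>R v j) = x"
    using assms by auto
next
  fix l' assume h: "(\<forall>j. j \<notin> T \<longrightarrow> l' j = 0) \<and> sum l' T = 1 \<and> (\<Sum>j\<in>T. l' j *\<^sub>R v j) = x"
  show "l' = l"
  proof (rule ccontr)
    assume ne: "l' \<noteq> l"
    define d where "d j = l' j - l j" for j
    obtain j where j: "l' j \<noteq> l j" using ne by blast
    have jT: "j \<in> T" using j h l0 by metis
    have s1: "sum d T = 0" using h l1 by (simp add: d_def sum_subtractf)
    have s2: "(\<Sum>j\<in>T. d j *\<^sub>R v j) = 0" using h l2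
      by (simp add: d_def scaleR_diff_left sum_subtractf)
    define U where "U y = d (inv_into T v y)" for y
    have r1: "sum U (v ` T) = sum d T"
      using sum.reindex[OF inj, of U] inj by (simp add: U_def)
    have r2: "(\<Sum>y\<in>v ` T. U y *\<^sub>R y) = (\<Sum>j\<in>T. d j *\<^sub>R v j)"
      using sum.reindex[OF inj, of "\<lambda>y. U y *\<^sub>R y"] inj by (simp add: U_def)
    have "U (v j) \<noteq> 0" using j jT inj by (simp add: U_def d_def)
    hence "affine_dependent (v ` T)"
      unfolding affine_dependent_explicit_finite[OF finite_imageI[OF fin]]
      using r1 r2 s1 s2 jT by (intro exI[of _ U]) auto
    with ind show False by simp
  qed
qed

lemma extend_simplex:
  fixes v :: "nat \<Rightarrow> real^'n"
  assumes cage: "is_cage K v P" and U: "U \<subseteq> {..<K}" and ind: "\<not> affine_dependent (v ` U)"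
  shows "\<exists>T. cage_simplex K v T \<and> U \<subseteq> T"
proof -
  have injK: "inj_on v {..<K}" and Pdef: "P = convex hull (v ` {..<K})" and dim: "aff_dim P = int CARD('n)"
    using cage by (auto simp: is_cage_def)
  obtain T' where T': "\<not> affine_dependent T'" "v ` U \<subseteq> T'" "T' \<subseteq> v ` {..<K}"
      "affine hull T' = affine hull (v ` {..<K})"
    using extend_to_affine_basis[OF ind, of "v ` {..<K}"] U by blast
  define T where "T = {i. i < K \<and> v i \<in> T'}"
  have TK: "T \<subseteq> {..<K}" by (auto simp: T_def)
  have vT: "v ` T = T'" using T'(3) by (auto simp: T_def)
  have injT: "inj_on v T" using injK TK inj_on_subset by blast
  have UT: "U \<subseteq> T" using U T'(2) by (auto simp: T_def)
  have "card T = card T'" using card_image[OF injT] vT by simp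
  moreover have "int (card T') = aff_dim T' + 1" using aff_dim_affine_independent[OF T'(1)] by simp
  moreover have "aff_dim T' = aff_dim P"
    using aff_dim_affine_hull2[OF T'(4)] Pdef aff_dim_convex_hull by metis
  ultimately have "card T = CARD('n) + 1" using dim by simp
  thus ?thesis using TK injT vT T'(1) UT by (auto simp: cage_simplex_def)
qed

definition validl :: "nat \<Rightarrow> (nat \<Rightarrow> real^'n) \<Rightarrow> real^'n \<Rightarrow> (nat \<Rightarrow> real) \<Rightarrow> bool" where
  "validl K v x l \<longleftrightarrow> (\<forall>i. K \<le> i \<longrightarrow> l i = 0) \<and> (\<forall>i<K. 0 \<le> l i) \<and>
     sum l {..<K} = 1 \<and> (\<Sum>i<K. l i *\<^sub>R v i) = x"

definition goodl :: "nat \<Rightarrow> (nat \<Rightarrow> real^'n) \<Rightarrow> real^'n \<Rightarrow> (nat \<Rightarrow> real) \<Rightarrow> bool" where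
  "goodl K v x l \<longleftrightarrow> (\<exists>w. (\<forall>T\<in>simplices_containing K v x. w T \<ge> 0) \<and>
     (\<Sum>T\<in>simplices_containing K v x. w T) = 1 \<and>
     (\<forall>i<K. l i = (\<Sum>T\<in>simplices_containing K v x. w T * cage_coords v T x i)))"

lemma finite_sc: "finite (simplices_containing K v x)"
proof (rule finite_subset[of _ "Pow {..<K}"])
  show "simplices_containing K v x \<subseteq> Pow {..<K}"
    by (auto simp: simplices_containing_def cage_simplex_def)
qed simp

lemma good_comb:
  assumes g1: "goodl K v x l1" and g2: "goodl K v x l2" and ab: "0 \<le> a" "0 \<le> b" "a + b = 1"
  shows "goodl K v x (\<lambda>i. a * l1 i + b * l2 i)"
proof -
  let ?S = "simplices_containing K v x"
  obtain w1 where w1: "\<forall>T\<in>?S. w1 T \<ge> 0" "sum w1 ?S = 1"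
    "\<forall>i<K. l1 i = (\<Sum>T\<in>?S. w1 T * cage_coords v T x i)"
    using g1 unfolding goodl_def by blast
  obtain w2 where w2: "\<forall>T\<in>?S. w2 T \<ge> 0" "sum w2 ?S = 1"
    "\<forall>i<K. l2 i = (\<Sum>T\<in>?S. w2 T * cage_coords v T x i)"
    using g2 unfolding goodl_def by blast
  show ?thesis unfolding goodl_def
  proof (intro exI[of _ "\<lambda>T. a * w1 T + b * w2 T"] conjI ballI allI impI)
    fix T assume "T \<in> ?S" thus "0 \<le> a * w1 T + b * w2 T" using w1 w2 ab by simp
  next
    show "(\<Sum>T\<in>?S. a * w1 T + b * w2 T) = 1"
      using w1 w2 ab by (simp add: sum.distrib sum_distrib_left[symmetric])
  next
    fix i assume "i < K"
    thus "a * l1 i + b * l2 i = (\<Sum>T\<in>?S. (a * w1 T + b * w2 T) * cage_coords v T x i)"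
      using w1 w2 by (simp add: sum.distrib sum_distrib_left algebra_simps)
  qed
qed

lemma good_base:
  fixes v :: "nat \<Rightarrow> real^'n"
  assumes cage: "is_cage K v P" and val: "validl K v x l"
    and ind: "\<not> affine_dependent (v ` {i. l i \<noteq> 0})"
  shows "goodl K v x l"
proof -
  let ?U = "{i. l i \<noteq> 0}"
  let ?S = "simplices_containing K v x"
  have UK: "?U \<subseteq> {..<K}" using val unfolding validl_def by (auto simp: not_less[symmetric])
  obtain T where T: "cage_simplex K v T" "?U \<subseteq> T"
    using extend_simplex[OF cage UK ind] by blast
  have TK: "T \<subseteq> {..<K}" and injT: "inj_on v T" and indT: "\<not> affine_dependent (v ` T)"
    using T(1) by (auto simp: cage_simplex_def)
  have finT: "finite T" using TK finite_subset by blast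
  have l0: "\<forall>j. j \<notin> T \<longrightarrow> l j = 0" using T(2) by auto
  have e1: "sum l {..<K} = sum l T"
    by (rule sum.mono_neutral_right) (use TK l0 in auto)
  have e2: "(\<Sum>i<K. l i *\<^sub>R v i) = (\<Sum>i\<in>T. l i *\<^sub>R v i)"
    by (rule sum.mono_neutral_right) (use TK l0 in auto)
  have s1: "sum l T = 1" and s2: "(\<Sum>i\<in>T. l i *\<^sub>R v i) = x"
    using val e1 e2 unfolding validl_def by auto
  have nn: "\<forall>i\<in>T. 0 \<le> l i" using val TK unfolding validl_def by auto
  have "(\<Sum>i\<in>T. l i *\<^sub>R v i) \<in> convex hull (v ` T)"
    by (rule convex_sum) (use finT s1 nn in \<open>auto intro: hull_inc\<close>)
  hence TS: "T \<in> ?S" using T(1) s2 by (simp add: simplices_containing_def)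
  have cc: "cage_coords v T x = l" by (rule cc_eq[OF finT injT indT l0 s1 s2])
  show ?thesis unfolding goodl_def
  proof (intro exI[of _ "\<lambda>T'. if T' = T then 1 else 0"] conjI ballI allI impI)
    show "(\<Sum>T'\<in>?S. if T' = T then 1 else 0) = (1::real)"
      using sum.delta[OF finite_sc[of K v x], of T "\<lambda>_. 1::real"] TS by simp
  next
    fix i assume "i < K"
    show "l i = (\<Sum>T'\<in>?S. (if T' = T then 1 else 0) * cage_coords v T' x i)"
    proof -
      have "(\<Sum>T'\<in>?S. (if T' = T then 1 else 0) * cage_coords v T' x i)
          = (\<Sum>T'\<in>?S. if T' = T then cage_coords v T' x i else 0)"
        by (rule sum.cong) auto
      also have "\<dots> = cage_coords v T x i"
        using sum.delta[OF finite_sc[of K v x], of T "\<lambda>T'. cage_coords v T' x i"] TS by simp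
      finally show ?thesis using cc by simp
    qed
  qed simp
qed

lemma split_step:
  fixes l mu :: "nat \<Rightarrow> real"
  assumes fin: "finite U" and pos: "\<forall>i\<in>U. 0 < l i" and j: "j \<in> U" "0 < mu j"
  shows "\<exists>t>0. (\<forall>i\<in>U. 0 \<le> l i - t * mu i) \<and> (\<exists>k\<in>U. l k - t * mu k = 0)"
proof -
  define R where "R = (\<lambda>i. l i / mu i) ` {i\<in>U. 0 < mu i}"
  have finR: "finite R" and neR: "R \<noteq> {}" using fin j by (auto simp: R_def)
  define t where "t = Min R"
  have "t \<in> R" using finR neR by (simp add: t_def)
  then obtain k where k: "k \<in> U" "0 < mu k" "t = l k / mu k" by (auto simp: R_def)
  have tpos: "t > 0" using k pos by simp
  have "\<forall>i\<in>U. 0 \<le> l i - t * mu i"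
  proof
    fix i assume i: "i \<in> U"
    show "0 \<le> l i - t * mu i"
    proof (cases "0 < mu i")
      case True
      hence "t \<le> l i / mu i" using finR i by (auto simp: t_def R_def)
      thus ?thesis using True by (simp add: field_simps)
    next
      case False
      hence "t * mu i \<le> 0" using tpos by (simp add: mult_nonneg_nonpos)
      thus ?thesis using pos[rule_format, OF i] by linarith
    qed
  qed
  moreover have "l k - t * mu k = 0" using k by simp
  ultimately show ?thesis using tpos k by blast
qed


lemma all_good:
  fixes v :: "nat \<Rightarrow> real^'n"
  assumes cage: "is_cage K v P"
  shows "validl K v x l \<Longrightarrow> goodl K v x l"
proof (induction "card {i. l i \<noteq> 0}" arbitrary: l rule: less_induct)
  case less
  let ?U = "{i. l i \<noteq> 0}"
  have val: "validl K v x l" by fact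
  have UK: "?U \<subseteq> {..<K}" using val unfolding validl_def by (auto simp: not_less[symmetric])
  have finU: "finite ?U" using UK finite_subset by blast
  have injK: "inj_on v {..<K}" using cage by (simp add: is_cage_def)
  have injU: "inj_on v ?U" using injK UK inj_on_subset by blast
  have lpos: "\<forall>i\<in>?U. 0 < l i"
  proof
    fix i assume i: "i \<in> ?U"
    hence "i < K" using UK by auto
    hence "0 \<le> l i" using val unfolding validl_def by blast
    thus "0 < l i" using i by simp
  qed
  show ?case
  proof (cases "affine_dependent (v ` ?U)")
    case False
    thus ?thesis using good_base[OF cage val] by blast
  next
    case True
    then obtain F where F: "sum F (v ` ?U) = 0" "\<exists>y\<in>v ` ?U. F y \<noteq> 0"
       "(\<Sum>y\<in>v ` ?U. F y *\<^sub>R y) = 0"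
      using affine_dependent_explicit_finite[OF finite_imageI[OF finU]] by blast
    define mu where "mu i = (if i \<in> ?U then F (v i) else 0)" for i
    have mu0: "\<forall>i. i \<notin> ?U \<longrightarrow> mu i = 0" by (simp add: mu_def)
    have m1: "sum mu ?U = 0"
      using F(1) sum.reindex[OF injU, of F] by (simp add: mu_def)
    have m2: "(\<Sum>i\<in>?U. mu i *\<^sub>R v i) = 0"
      using F(3) sum.reindex[OF injU, of "\<lambda>y. F y *\<^sub>R y"] by (simp add: mu_def)
    obtain j0 where j0: "j0 \<in> ?U" "mu j0 \<noteq> 0" using F(2) by (auto simp: mu_def)
    have ex_pos: "\<exists>j\<in>?U. 0 < mu j"
    proof (rule ccontr)
      assume na: "\<not> (\<exists>j\<in>?U. 0 < mu j)"
      have nn: "\<forall>j\<in>?U. 0 \<le> - mu j"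
      proof
        fix j assume "j \<in> ?U"
        hence "\<not> 0 < mu j" using na by blast
        thus "0 \<le> - mu j" by simp
      qed
      have s0: "sum (\<lambda>j. - mu j) ?U = 0" using m1 by (simp add: sum_negf)
      have "- mu j0 = 0"
        using iffD1[OF sum_nonneg_eq_0_iff[OF finU bspec[OF nn]] s0] j0(1) by blast
      thus False using j0(2) by simp
    qed
    have ex_neg: "\<exists>j\<in>?U. 0 < - mu j"
    proof (rule ccontr)
      assume na: "\<not> (\<exists>j\<in>?U. 0 < - mu j)"
      have nn: "\<forall>j\<in>?U. 0 \<le> mu j"
      proof
        fix j assume "j \<in> ?U"
        hence "\<not> 0 < - mu j" using na by blast
        thus "0 \<le> mu j" by simp
      qed
      have "mu j0 = 0"
        using iffD1[OF sum_nonneg_eq_0_iff[OF finU bspec[OF nn]] m1] j0(1) by blast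
      thus False using j0(2) by simp
    qed
    obtain t1 k1 where t1: "t1 > 0" "\<forall>i\<in>?U. 0 \<le> l i - t1 * mu i" "k1 \<in> ?U" "l k1 - t1 * mu k1 = 0"
      using split_step[OF finU lpos, of _ mu] ex_pos by blast
    obtain t2 k2 where t2: "t2 > 0" "\<forall>i\<in>?U. 0 \<le> l i - t2 * (- mu i)" "k2 \<in> ?U" "l k2 - t2 * (- mu k2) = 0"
      using split_step[OF finU lpos, of _ "\<lambda>i. - mu i"] ex_neg by blast
    have summ: "sum mu {..<K} = 0"
      using m1 sum.mono_neutral_right[of "{..<K}" ?U mu] UK mu0 by auto
    have sumv: "(\<Sum>i<K. mu i *\<^sub>R v i) = 0"
      using m2 sum.mono_neutral_right[of "{..<K}" ?U "\<lambda>i. mu i *\<^sub>R v i"] UK mu0 by auto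
    have gen: "goodl K v x (\<lambda>i. l i + c * mu i)"
      if c1: "\<forall>i\<in>?U. 0 \<le> l i + c * mu i" and c2: "k \<in> ?U" "l k + c * mu k = 0" for c k
    proof -
      let ?l = "\<lambda>i. l i + c * mu i"
      have "validl K v x ?l"
        unfolding validl_def
      proof (intro conjI allI impI)
        fix i assume "K \<le> i" thus "?l i = 0" using val mu0 UK unfolding validl_def by auto
      next
        fix i assume "i < K" thus "0 \<le> ?l i"
          using c1 mu0 by (cases "i \<in> ?U") auto
      next
        show "sum ?l {..<K} = 1" using val summ
          by (simp add: validl_def sum.distrib sum_distrib_left[symmetric])
      next
        have "(\<Sum>i<K. ?l i *\<^sub>R v i) = (\<Sum>i<K. l i *\<^sub>R v i) + c *\<^sub>R (\<Sum>i<K. mu i *\<^sub>R v i)"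
          by (simp add: scaleR_add_left sum.distrib scaleR_sum_right)
        thus "(\<Sum>i<K. ?l i *\<^sub>R v i) = x" using val sumv by (simp add: validl_def)
      qed
      moreover have "{i. ?l i \<noteq> 0} \<subset> ?U"
      proof
        show "{i. ?l i \<noteq> 0} \<subseteq> ?U" using mu0 by auto
        show "{i. ?l i \<noteq> 0} \<noteq> ?U" using c2 by auto
      qed
      hence "card {i. ?l i \<noteq> 0} < card ?U" using finU psubset_card_mono by blast
      ultimately show ?thesis using less.hyps[of "\<lambda>i. l i + c * mu i"] by blast
    qed
    have g1: "goodl K v x (\<lambda>i. l i + (- t1) * mu i)"
      by (rule gen[of "- t1" k1]) (use t1 in auto)
    have g2: "goodl K v x (\<lambda>i. l i + t2 * mu i)"
      by (rule gen[of t2 k2]) (use t2 in auto)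
    have gc: "goodl K v x (\<lambda>i. (t2 / (t1 + t2)) * (l i + (- t1) * mu i) + (t1 / (t1 + t2)) * (l i + t2 * mu i))"
    proof (rule good_comb[OF g1 g2])
      show "0 \<le> t2 / (t1 + t2)" "0 \<le> t1 / (t1 + t2)" using t1 t2 by simp_all
      show "t2 / (t1 + t2) + t1 / (t1 + t2) = 1" using t1 t2 by (simp add: add_divide_distrib[symmetric])
    qed
    have "(\<lambda>i. (t2 / (t1 + t2)) * (l i + (- t1) * mu i) + (t1 / (t1 + t2)) * (l i + t2 * mu i)) = l"
    proof
      fix i
      have ne: "t1 + t2 \<noteq> 0" using t1 t2 by simp
      have "(t2 / (t1 + t2)) * (l i + (- t1) * mu i) + (t1 / (t1 + t2)) * (l i + t2 * mu i)
          = ((t2 * (l i + (- t1) * mu i)) + (t1 * (l i + t2 * mu i))) / (t1 + t2)"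
        by (simp add: add_divide_distrib)
      also have "(t2 * (l i + (- t1) * mu i)) + (t1 * (l i + t2 * mu i)) = (t1 + t2) * l i"
        by (simp add: algebra_simps)
      finally show "(t2 / (t1 + t2)) * (l i + (- t1) * mu i) + (t1 / (t1 + t2)) * (l i + t2 * mu i) = l i"
        using ne by simp
    qed
    thus ?thesis using gc by simp
  qed
qed

theorem proposition1:
  fixes K :: nat and v :: "nat \<Rightarrow> real^'n" and P :: "(real^'n) set"
    and alpha :: "real^'n \<Rightarrow> nat \<Rightarrow> real"
  assumes "is_cage K v P"
    and "valid_gbc K v P alpha"
    and "x \<in> P"
  shows "\<exists>w :: nat set \<Rightarrow> real.
           (\<forall>T\<in>simplices_containing K v x. w T \<ge> 0) \<and>
           (\<Sum>T\<in>simplices_containing K v x. w T) = 1 \<and>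
           (\<forall>i<K. alpha x i = (\<Sum>T\<in>simplices_containing K v x. w T * cage_coords v T x i))"
proof -
  define l where "l i = (if i < K then alpha x i else 0)" for i
  have a: "\<forall>i<K. alpha x i \<ge> 0" "(\<Sum>i<K. alpha x i) = 1" "(\<Sum>i<K. alpha x i *\<^sub>R v i) = x"
    using assms(2,3) unfolding valid_gbc_def by auto
  have "validl K v x l" unfolding validl_def l_def using a by auto
  hence "goodl K v x l" using all_good[OF assms(1)] by blast
  then obtain w where w: "\<forall>T\<in>simplices_containing K v x. w T \<ge> 0"
     "(\<Sum>T\<in>simplices_containing K v x. w T) = 1"
     "\<forall>i<K. l i = (\<Sum>T\<in>simplices_containing K v x. w T * cage_coords v T x i)"
    unfolding goodl_def by blast
  show ?thesis using w by (intro exI[of _ w]) (auto simp: l_def)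
qed

end
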